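(* Let $H:\mathbb{T}^d\times\mathbb{R}^d\to\mathbb{R}$ be smooth and let $(u,m,\overline{H})$ be a classical solution of $$\Delta u+H(x,Du)=g(m)+\overline{H},\qquad \Delta m-\operatorname{div}(D_pH(x,Du)\,m)=0\quad\text{on }\mathbb{T}^d,$$ with $m>0$. Then for every $l>1$, $$\int_{\mathbb{T}^d}\Big|D\big(|\ln m|^{\frac{l+1}{2}}\big)\Big|^2dx\le\frac{(l+1)^2}{4}\int_{\mathbb{T}^d}|\ln m|^{l-1}\,|D_pH(x,Du)|^2\,dx.$$
   Context: $\mathbb{T}^d=\mathbb{R}^d/\mathbb{Z}^d$; a classical solution means $u,m$ are $C^2$ and the equations hold pointwise. *)

theory Defs
  imports "HOL-Analysis.Analysis"
begin

definition partial :: "'a::euclidean_space \<Rightarrow> ('a \<Rightarrow> real) \<Rightarrow> 'a \<Rightarrow> real" where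
  "partial b f x = deriv (\<lambda>t. f (x + t *\<^sub>R b)) 0"

fun Ck :: "nat \<Rightarrow> ('a::euclidean_space \<Rightarrow> real) \<Rightarrow> bool" where
  "Ck 0 f = continuous_on UNIV f"
| "Ck (Suc k) f = ((\<forall>x. f differentiable (at x)) \<and> continuous_on UNIV f
                   \<and> (\<forall>b\<in>Basis. Ck k (partial b f)))"

definition smooth :: "('a::euclidean_space \<Rightarrow> real) \<Rightarrow> bool" where
  "smooth f = (\<forall>k. Ck k f)"

definition grad :: "('a::euclidean_space \<Rightarrow> real) \<Rightarrow> 'a \<Rightarrow> 'a" where
  "grad f x = (\<Sum>b\<in>Basis. partial b f x *\<^sub>R b)"

definition laplacian :: "('a::euclidean_space \<Rightarrow> real) \<Rightarrow> 'a \<Rightarrow> real" where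
  "laplacian f x = (\<Sum>b\<in>Basis. partial b (partial b f) x)"

definition divergence :: "('a::euclidean_space \<Rightarrow> 'a) \<Rightarrow> 'a \<Rightarrow> real" where
  "divergence F x = (\<Sum>b\<in>Basis. partial b (\<lambda>y. F y \<bullet> b) x)"

definition DpH :: "('a::euclidean_space \<Rightarrow> 'a \<Rightarrow> real) \<Rightarrow> 'a \<Rightarrow> 'a \<Rightarrow> 'a" where
  "DpH H x p = grad (\<lambda>q. H x q) p"

text \<open>Integer lattice Z^d in R^d; functions on the torus = Z^d-periodic functions.\<close>
definition int_vec :: "real^'n \<Rightarrow> bool" where
  "int_vec k = (\<forall>i. k $ i \<in> \<int>)"

definition periodic :: "(real^'n \<Rightarrow> 'b) \<Rightarrow> bool" where
  "periodic f = (\<forall>x k. int_vec k \<longrightarrow> f (x + k) = f x)"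

text \<open>Integral over the torus = integral over the unit cube of the periodic lift.\<close>
definition torus_integral :: "(real^'n \<Rightarrow> real) \<Rightarrow> real" where
  "torus_integral f = integral (cbox 0 One) f"

end

theory Submission
  imports Defs
begin

definition C1 :: "('a::euclidean_space \<Rightarrow> real) \<Rightarrow> bool" where
  "C1 f \<longleftrightarrow> (\<forall>x. f differentiable (at x)) \<and> (\<forall>b\<in>Basis. continuous_on UNIV (partial b f))"

lemma partial_frechet:
  assumes "(f has_derivative L) (at x)"
  shows "partial b f x = L b"
proof -
  have d1: "((\<lambda>t::real. x + t *\<^sub>R b) has_derivative (\<lambda>t. t *\<^sub>R b)) (at 0)"
    by (auto intro!: derivative_eq_intros)
  have "((\<lambda>t::real. f (x + t *\<^sub>R b)) has_derivative (\<lambda>t. L (t *\<^sub>R b))) (at 0)"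
    using has_derivative_compose[OF d1, of f L] assms by simp
  moreover have "linear L" using assms has_derivative_linear by blast
  ultimately have "((\<lambda>t::real. f (x + t *\<^sub>R b)) has_derivative (\<lambda>t. t * L b)) (at 0)"
    by (simp add: linear_scale)
  then have "((\<lambda>t::real. f (x + t *\<^sub>R b)) has_field_derivative L b) (at 0)"
    by (simp add: has_field_derivative_def mult.commute[of _ "L b"])
  then show ?thesis unfolding partial_def by (rule DERIV_imp_deriv)
qed

lemma C1_deriv:
  assumes "C1 f"
  shows "(f has_derivative (\<lambda>v. \<Sum>b\<in>Basis. (v \<bullet> b) * partial b f x)) (at x)"
proof -
  from assms obtain L where L: "(f has_derivative L) (at x)"
    unfolding C1_def differentiable_def by blast
  have lin: "linear L" using L has_derivative_linear by blast
  have "L v = (\<Sum>b\<in>Basis. (v \<bullet> b) * partial b f x)" for v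
  proof -
    have "L v = L (\<Sum>b\<in>Basis. (v \<bullet> b) *\<^sub>R b)" by (simp add: euclidean_representation)
    also have "\<dots> = (\<Sum>b\<in>Basis. (v \<bullet> b) * L b)"
      using lin by (simp add: linear_sum linear_scale)
    finally show ?thesis using partial_frechet[OF L] by simp
  qed
  then have "L = (\<lambda>v. \<Sum>b\<in>Basis. (v \<bullet> b) * partial b f x)" by auto
  then show ?thesis using L by simp
qed

lemma Ck_cont: "Ck k f \<Longrightarrow> continuous_on UNIV f"
  by (cases k) auto

lemma Ck_Suc_C1: "Ck (Suc k) f \<Longrightarrow> C1 f"
  by (auto simp: C1_def intro: Ck_cont)

lemma C1_cont: "C1 f \<Longrightarrow> continuous_on UNIV f"
  unfolding C1_def
  by (meson continuous_at_imp_continuous_on differentiable_imp_continuous_within)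

lemma C1_has_derivative:
  assumes "\<And>x. (f has_derivative (\<lambda>v. \<Sum>b\<in>Basis. (v \<bullet> b) * D b x)) (at x)"
    and "\<And>b. b \<in> Basis \<Longrightarrow> continuous_on UNIV (D b)"
  shows "C1 f" and "\<And>b x. b \<in> Basis \<Longrightarrow> partial b f x = D b x"
proof -
  show pd: "partial b f x = D b x" if "b \<in> Basis" for b x
  proof -
    have "partial b f x = (\<Sum>c\<in>Basis. (b \<bullet> c) * D c x)"
      using partial_frechet[OF assms(1)[of x], of b] by simp
    also have "\<dots> = (\<Sum>c\<in>Basis. (if c = b then D c x else 0))"
      using that by (intro sum.cong) (auto simp: inner_Basis)
    finally show ?thesis using that by simp
  qed
  show "C1 f" unfolding C1_def
  proof
    show "\<forall>x. f differentiable at x" using assms(1) differentiable_def by blast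
    show "\<forall>b\<in>Basis. continuous_on UNIV (partial b f)"
    proof
      fix b :: 'a assume b: "b \<in> Basis"
      have "partial b f = D b" using pd[OF b] by auto
      then show "continuous_on UNIV (partial b f)" using assms(2)[OF b] by simp
    qed
  qed
qed

lemma C1_mult:
  assumes "C1 f" "C1 g"
  shows "C1 (\<lambda>x. f x * g x)"
    and "\<And>b x. b \<in> Basis \<Longrightarrow> partial b (\<lambda>x. f x * g x) x = partial b f x * g x + f x * partial b g x"
proof -
  have d: "((\<lambda>x. f x * g x) has_derivative (\<lambda>v. \<Sum>b\<in>Basis. (v \<bullet> b) * (partial b f x * g x + f x * partial b g x))) (at x)" for x
  proof -
    have "((\<lambda>x. f x * g x) has_derivative (\<lambda>v. f x * (\<Sum>b\<in>Basis. (v \<bullet> b) * partial b g x) + (\<Sum>b\<in>Basis. (v \<bullet> b) * partial b f x) * g x)) (at x)"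
      by (rule has_derivative_mult[OF C1_deriv[OF assms(1)] C1_deriv[OF assms(2)]])
    then show ?thesis
      by (rule has_derivative_eq_rhs) (auto simp: algebra_simps sum_distrib_left sum_distrib_right sum.distrib)
  qed
  have c: "continuous_on UNIV (\<lambda>x. partial b f x * g x + f x * partial b g x)" if "b \<in> Basis" for b
    using assms that C1_cont unfolding C1_def by (intro continuous_intros) auto
  show "C1 (\<lambda>x. f x * g x)" by (rule C1_has_derivative(1)[OF d c])
  show "\<And>b x. b \<in> Basis \<Longrightarrow> partial b (\<lambda>x. f x * g x) x = partial b f x * g x + f x * partial b g x"
    by (rule C1_has_derivative(2)[OF d c])
qed

lemma C1_diff:
  assumes "C1 f" "C1 g"
  shows "C1 (\<lambda>x. f x - g x)"
    and "\<And>b x. b \<in> Basis \<Longrightarrow> partial b (\<lambda>x. f x - g x) x = partial b f x - partial b g x"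
proof -
  have d: "((\<lambda>x. f x - g x) has_derivative (\<lambda>v. \<Sum>b\<in>Basis. (v \<bullet> b) * (partial b f x - partial b g x))) (at x)" for x
  proof -
    have "((\<lambda>x. f x - g x) has_derivative (\<lambda>v. (\<Sum>b\<in>Basis. (v \<bullet> b) * partial b f x) - (\<Sum>b\<in>Basis. (v \<bullet> b) * partial b g x))) (at x)"
      by (rule has_derivative_diff[OF C1_deriv[OF assms(1)] C1_deriv[OF assms(2)]])
    then show ?thesis
      by (rule has_derivative_eq_rhs) (auto simp: algebra_simps sum_subtractf)
  qed
  have c: "continuous_on UNIV (\<lambda>x. partial b f x - partial b g x)" if "b \<in> Basis" for b
    using assms that unfolding C1_def by (intro continuous_intros) auto
  show "C1 (\<lambda>x. f x - g x)" by (rule C1_has_derivative(1)[OF d c])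
  show "\<And>b x. b \<in> Basis \<Longrightarrow> partial b (\<lambda>x. f x - g x) x = partial b f x - partial b g x"
    by (rule C1_has_derivative(2)[OF d c])
qed

lemma sum_Basis_inner:
  assumes "b \<in> Basis" shows "(\<Sum>c\<in>Basis. (b \<bullet> c) * D c) = (D b :: real)"
proof -
  have "(\<Sum>c\<in>Basis. (b \<bullet> c) * D c) = (\<Sum>c\<in>Basis. (if c = b then D c else 0))"
    using assms by (intro sum.cong) (auto simp: inner_Basis)
  then show ?thesis using assms by simp
qed

lemma partial_chain_real:
  assumes "C1 f" "(k has_real_derivative k') (at (f x))" "b \<in> Basis"
  shows "partial b (\<lambda>y. k (f y)) x = k' * partial b f x"
proof -
  have "((\<lambda>y. k (f y)) has_derivative (\<lambda>v. k' * (\<Sum>c\<in>Basis. (v \<bullet> c) * partial c f x))) (at x)"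
    using has_derivative_compose[OF C1_deriv[OF assms(1)], of k "\<lambda>t. k' * t"] assms(2)
    by (simp add: has_field_derivative_def mult.commute[of _ k'])
  from partial_frechet[OF this, of b] assms(3) show ?thesis
    by (simp add: sum_Basis_inner)
qed

lemma C1_chain_real:
  assumes "C1 f" "\<And>y. (k has_real_derivative k' (f y)) (at (f y))"
    and "continuous_on UNIV (\<lambda>y. k' (f y))"
  shows "C1 (\<lambda>y. k (f y))"
proof -
  have d: "((\<lambda>y. k (f y)) has_derivative (\<lambda>v. \<Sum>b\<in>Basis. (v \<bullet> b) * (k' (f x) * partial b f x))) (at x)" for x
  proof -
    have "((\<lambda>y. k (f y)) has_derivative (\<lambda>v. k' (f x) * (\<Sum>c\<in>Basis. (v \<bullet> c) * partial c f x))) (at x)"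
      using has_derivative_compose[OF C1_deriv[OF assms(1)], of k "\<lambda>t. k' (f x) * t"] assms(2)[of x]
      by (simp add: has_field_derivative_def mult.commute[of _ "k' (f x)"])
    then show ?thesis by (rule has_derivative_eq_rhs) (auto simp: algebra_simps sum_distrib_left)
  qed
  have c: "continuous_on UNIV (\<lambda>x. k' (f x) * partial b f x)" if "b \<in> Basis" for b
    using assms that unfolding C1_def by (intro continuous_intros) auto
  show ?thesis by (rule C1_has_derivative(1)[OF d c])
qed

lemma C1_chain:
  fixes F :: "'b::euclidean_space \<Rightarrow> real" and h :: "'a::euclidean_space \<Rightarrow> 'b"
  assumes F: "C1 F" and h: "\<And>c. c \<in> Basis \<Longrightarrow> C1 (\<lambda>y. h y \<bullet> c)"
  shows "C1 (\<lambda>y. F (h y))"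
    and "\<And>e x. e \<in> Basis \<Longrightarrow> partial e (\<lambda>y. F (h y)) x = (\<Sum>c\<in>Basis. partial e (\<lambda>y. h y \<bullet> c) x * partial c F (h x))"
proof -
  define Dh where "Dh x v = (\<Sum>c\<in>Basis. (\<Sum>b\<in>Basis. (v \<bullet> b) * partial b (\<lambda>y. h y \<bullet> c) x) *\<^sub>R c)" for x v
  have hd: "(h has_derivative Dh x) (at x)" for x
  proof -
    have "((\<lambda>y. \<Sum>c\<in>Basis. (h y \<bullet> c) *\<^sub>R c) has_derivative Dh x) (at x)"
      unfolding Dh_def
      by (intro has_derivative_sum has_derivative_scaleR_left C1_deriv h)
    then show ?thesis by (simp add: euclidean_representation)
  qed
  have d: "((\<lambda>y. F (h y)) has_derivative (\<lambda>v. \<Sum>e\<in>Basis. (v \<bullet> e) * (\<Sum>c\<in>Basis. partial e (\<lambda>y. h y \<bullet> c) x * partial c F (h x)))) (at x)" for x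
  proof -
    have "((\<lambda>y. F (h y)) has_derivative (\<lambda>v. \<Sum>c\<in>Basis. (Dh x v \<bullet> c) * partial c F (h x))) (at x)"
      using has_derivative_compose[OF hd C1_deriv[OF F]] by simp
    moreover have "Dh x v \<bullet> c = (\<Sum>b\<in>Basis. (v \<bullet> b) * partial b (\<lambda>y. h y \<bullet> c) x)" if "c \<in> Basis" for v c
      unfolding Dh_def using that
      by (simp add: inner_sum_left inner_Basis if_distrib sum.delta cong: if_cong)
    ultimately have "((\<lambda>y. F (h y)) has_derivative (\<lambda>v. \<Sum>c\<in>Basis. (\<Sum>b\<in>Basis. (v \<bullet> b) * partial b (\<lambda>y. h y \<bullet> c) x) * partial c F (h x))) (at x)"
      by (elim has_derivative_eq_rhs) (intro ext sum.cong; simp)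
    then show ?thesis
      by (rule has_derivative_eq_rhs)
        (auto simp: sum_distrib_left sum_distrib_right algebra_simps intro: sum.swap)
  qed
  have hc: "continuous_on UNIV h"
  proof -
    have "continuous_on UNIV (\<lambda>y. \<Sum>c\<in>Basis. (h y \<bullet> c) *\<^sub>R c)"
      using h C1_cont by (intro continuous_on_sum continuous_on_scaleR continuous_on_const) auto
    then show ?thesis by (simp add: euclidean_representation)
  qed
  have c: "continuous_on UNIV (\<lambda>x. \<Sum>c\<in>Basis. partial e (\<lambda>y. h y \<bullet> c) x * partial c F (h x))" if "e \<in> Basis" for e
    using F h that hc unfolding C1_def
    by (intro continuous_intros continuous_on_compose2[of UNIV "partial _ F" UNIV h]) auto
  show "C1 (\<lambda>y. F (h y))" by (rule C1_has_derivative(1)[OF d c])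
  show "\<And>e x. e \<in> Basis \<Longrightarrow> partial e (\<lambda>y. F (h y)) x = (\<Sum>c\<in>Basis. partial e (\<lambda>y. h y \<bullet> c) x * partial c F (h x))"
    by (rule C1_has_derivative(2)[OF d c])
qed

lemma integral_translate:
  fixes f :: "'a::euclidean_space \<Rightarrow> real"
  assumes "continuous_on UNIV f"
  shows "integral (cbox a b) (\<lambda>x. f (x + c)) = integral (cbox (a + c) (b + c)) f"
proof -
  have "(f has_integral integral (cbox (a + c) (b + c)) f) (cbox (a + c) (b + c))"
    using assms by (intro integrable_integral integrable_continuous) (auto intro: continuous_on_subset)
  from has_integral_affinity'[OF this, of 1 c] show ?thesis
    by (simp add: integral_unique)
qed

lemma inner_One_Basis_t:
  fixes b :: "'a::euclidean_space"
  assumes "b \<in> Basis" "i \<in> Basis"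
  shows "(One + t *\<^sub>R b) \<bullet> i = (if i = b then 1 + t else 1)"
    and "(One + t *\<^sub>R b - b) \<bullet> i = (if i = b then t else 1)"
    and "(t *\<^sub>R b) \<bullet> i = (if i = b then t else 0)"
    and "b \<bullet> i = (if i = b then 1 else 0)"
    and "(One::'a) \<bullet> i = 1" "(0::'a) \<bullet> i = 0"
  using assms by (auto simp: inner_simps inner_Basis)

lemma box_cut_le:
  fixes b :: "'a::euclidean_space"
  assumes b: "b \<in> Basis" and o: "\<And>i. i \<in> Basis \<Longrightarrow> i \<noteq> b \<Longrightarrow> c2 \<bullet> i = c1 \<bullet> i"
    and m: "c2 \<bullet> b = min (c1 \<bullet> b) h"
  shows "cbox a c1 \<inter> {x. x \<bullet> b \<le> h} = cbox a c2"
proof (rule set_eqI)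
  fix x
  show "x \<in> cbox a c1 \<inter> {x. x \<bullet> b \<le> h} \<longleftrightarrow> x \<in> cbox a c2"
  proof
    assume "x \<in> cbox a c1 \<inter> {x. x \<bullet> b \<le> h}"
    then have A: "\<forall>i\<in>Basis. a \<bullet> i \<le> x \<bullet> i \<and> x \<bullet> i \<le> c1 \<bullet> i" "x \<bullet> b \<le> h" by (auto simp: mem_box)
    show "x \<in> cbox a c2" unfolding mem_box
    proof (intro ballI)
      fix i :: 'a assume i: "i \<in> Basis"
      show "a \<bullet> i \<le> x \<bullet> i \<and> x \<bullet> i \<le> c2 \<bullet> i"
        by (cases "i = b") (use A i o m in auto)
    qed
  next
    assume "x \<in> cbox a c2"
    then have A: "\<forall>i\<in>Basis. a \<bullet> i \<le> x \<bullet> i \<and> x \<bullet> i \<le> c2 \<bullet> i" by (auto simp: mem_box)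
    have "a \<bullet> i \<le> x \<bullet> i \<and> x \<bullet> i \<le> c1 \<bullet> i" if i: "i \<in> Basis" for i :: 'a
      by (cases "i = b") (use A i o m in auto)
    moreover have "x \<bullet> b \<le> h" using A b m by auto
    ultimately show "x \<in> cbox a c1 \<inter> {x. x \<bullet> b \<le> h}" by (auto simp: mem_box)
  qed
qed

lemma box_cut_ge:
  fixes b :: "'a::euclidean_space"
  assumes b: "b \<in> Basis" and o: "\<And>i. i \<in> Basis \<Longrightarrow> i \<noteq> b \<Longrightarrow> a2 \<bullet> i = a1 \<bullet> i"
    and m: "a2 \<bullet> b = max (a1 \<bullet> b) h"
  shows "cbox a1 c \<inter> {x. h \<le> x \<bullet> b} = cbox a2 c"
proof (rule set_eqI)
  fix x
  show "x \<in> cbox a1 c \<inter> {x. h \<le> x \<bullet> b} \<longleftrightarrow> x \<in> cbox a2 c"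
  proof
    assume "x \<in> cbox a1 c \<inter> {x. h \<le> x \<bullet> b}"
    then have A: "\<forall>i\<in>Basis. a1 \<bullet> i \<le> x \<bullet> i \<and> x \<bullet> i \<le> c \<bullet> i" "h \<le> x \<bullet> b" by (auto simp: mem_box)
    show "x \<in> cbox a2 c" unfolding mem_box
    proof (intro ballI)
      fix i :: 'a assume i: "i \<in> Basis"
      show "a2 \<bullet> i \<le> x \<bullet> i \<and> x \<bullet> i \<le> c \<bullet> i"
        by (cases "i = b") (use A i o m in auto)
    qed
  next
    assume "x \<in> cbox a2 c"
    then have A: "\<forall>i\<in>Basis. a2 \<bullet> i \<le> x \<bullet> i \<and> x \<bullet> i \<le> c \<bullet> i" by (auto simp: mem_box)
    have "a1 \<bullet> i \<le> x \<bullet> i \<and> x \<bullet> i \<le> c \<bullet> i" if i: "i \<in> Basis" for i :: 'a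
      by (cases "i = b") (use A i o m in auto)
    moreover have "h \<le> x \<bullet> b" using A b m by auto
    ultimately show "x \<in> cbox a1 c \<inter> {x. h \<le> x \<bullet> b}" by (auto simp: mem_box)
  qed
qed

lemma split_sets:
  fixes b :: "'a::euclidean_space"
  assumes b: "b \<in> Basis" and t: "0 \<le> t" "t \<le> 1"
  shows "cbox 0 (One + t *\<^sub>R b) \<inter> {x. x \<bullet> b \<le> t} = cbox 0 (One + t *\<^sub>R b - b)"
    and "cbox 0 (One + t *\<^sub>R b) \<inter> {x. t \<le> x \<bullet> b} = cbox (t *\<^sub>R b) (One + t *\<^sub>R b)"
    and "cbox 0 (One + t *\<^sub>R b) \<inter> {x. x \<bullet> b \<le> 1} = cbox 0 One"
    and "cbox 0 (One + t *\<^sub>R b) \<inter> {x. 1 \<le> x \<bullet> b} = cbox b (One + t *\<^sub>R b)"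
proof -
  note L = inner_One_Basis_t[OF b]
  note Lb = inner_One_Basis_t[OF b b]
  show "cbox 0 (One + t *\<^sub>R b) \<inter> {x. x \<bullet> b \<le> t} = cbox 0 (One + t *\<^sub>R b - b)"
    by (rule box_cut_le[OF b]) (use L Lb t in simp_all)
  show "cbox 0 (One + t *\<^sub>R b) \<inter> {x. t \<le> x \<bullet> b} = cbox (t *\<^sub>R b) (One + t *\<^sub>R b)"
    by (rule box_cut_ge[OF b]) (use L Lb t in simp_all)
  show "cbox 0 (One + t *\<^sub>R b) \<inter> {x. x \<bullet> b \<le> 1} = cbox 0 One"
    by (rule box_cut_le[OF b]) (use L Lb t in simp_all)
  show "cbox 0 (One + t *\<^sub>R b) \<inter> {x. 1 \<le> x \<bullet> b} = cbox b (One + t *\<^sub>R b)"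
    by (rule box_cut_ge[OF b]) (use L Lb t in simp_all)
qed

lemma trans_inv:
  fixes f :: "'a::euclidean_space \<Rightarrow> real"
  assumes cont: "continuous_on UNIV f" and b: "b \<in> Basis"
    and per: "\<And>x. f (x + b) = f x" and t: "0 \<le> t" "t \<le> 1"
  shows "integral (cbox 0 One) (\<lambda>x. f (x + t *\<^sub>R b)) = integral (cbox 0 One) f"
proof -
  define B where "B = cbox (0::'a) (One + t *\<^sub>R b)"
  have intB: "f integrable_on B" unfolding B_def
    using cont by (intro integrable_continuous) (auto intro: continuous_on_subset)
  note S = split_sets[OF b t]
  have e1: "integral B f = integral (cbox 0 (One + t *\<^sub>R b - b)) f + integral (cbox (t *\<^sub>R b) (One + t *\<^sub>R b)) f"
    using integral_split[OF intB[unfolded B_def] b, of t] S by (simp add: B_def)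
  have e2: "integral B f = integral (cbox 0 One) f + integral (cbox b (One + t *\<^sub>R b)) f"
    using integral_split[OF intB[unfolded B_def] b, of 1] S by (simp add: B_def)
  have e3: "integral (cbox b (One + t *\<^sub>R b)) f = integral (cbox 0 (One + t *\<^sub>R b - b)) f"
    using integral_translate[OF cont, of 0 "One + t *\<^sub>R b - b" b] per by simp
  have e4: "integral (cbox 0 One) (\<lambda>x. f (x + t *\<^sub>R b)) = integral (cbox (t *\<^sub>R b) (One + t *\<^sub>R b)) f"
    using integral_translate[OF cont, of 0 One "t *\<^sub>R b"] by (simp add: add.commute)
  show ?thesis using e1 e2 e3 e4 by simp
qed

lemma C1_line_deriv:
  assumes "C1 F" "b \<in> Basis"
  shows "((\<lambda>t. F (x + t *\<^sub>R b)) has_real_derivative partial b F (x + t *\<^sub>R b)) (at t)"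
proof -
  have d1: "((\<lambda>t::real. x + t *\<^sub>R b) has_derivative (\<lambda>s. s *\<^sub>R b)) (at t)"
    by (auto intro!: derivative_eq_intros)
  have "((\<lambda>t. F (x + t *\<^sub>R b)) has_derivative (\<lambda>s. \<Sum>c\<in>Basis. ((s *\<^sub>R b) \<bullet> c) * partial c F (x + t *\<^sub>R b))) (at t)"
    using has_derivative_compose[OF d1 C1_deriv[OF assms(1)]] by simp
  moreover have "(\<Sum>c\<in>Basis. ((s *\<^sub>R b) \<bullet> c) * partial c F (x + t *\<^sub>R b)) = partial b F (x + t *\<^sub>R b) * s" for s
    using sum_Basis_inner[OF assms(2), of "\<lambda>c. s * partial c F (x + t *\<^sub>R b)"]
    by (simp add: algebra_simps sum_distrib_left)
  ultimately show ?thesis unfolding has_field_derivative_def by simp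
qed

lemma integral_partial_zero:
  fixes F :: "'a::euclidean_space \<Rightarrow> real"
  assumes F: "C1 F" and b: "b \<in> Basis" and per: "\<And>x. F (x + b) = F x"
  shows "integral (cbox 0 One) (partial b F) = 0"
proof -
  define D where "D = partial b F"
  have Dc: "continuous_on UNIV D" using F b unfolding C1_def D_def by auto
  have Fc: "continuous_on UNIV F" using F by (rule C1_cont)
  define \<Phi> where "\<Phi> t = integral (cbox 0 One) (\<lambda>x. F (x + t *\<^sub>R b))" for t
  have lin: "continuous_on A (\<lambda>x. x + t *\<^sub>R b)" for A t by (intro continuous_on_add continuous_on_id continuous_on_const)
  have "(\<Phi> has_field_derivative integral (cbox 0 One) (\<lambda>x. D (x + 0 *\<^sub>R b))) (at 0 within UNIV)"
    unfolding \<Phi>_def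
  proof (rule leibniz_rule_field_derivative[where fx = "\<lambda>t x. D (x + t *\<^sub>R b)"])
    show "((\<lambda>t. F (x + t *\<^sub>R b)) has_field_derivative D (x + t *\<^sub>R b)) (at t within UNIV)" for t x
      using C1_line_deriv[OF F b] unfolding D_def by simp
    show "(\<lambda>x. F (x + t *\<^sub>R b)) integrable_on cbox 0 One" for t
      by (intro integrable_continuous continuous_on_compose2[OF Fc lin]) auto
    have "continuous_on (UNIV \<times> cbox 0 One) (\<lambda>z. D (snd z + fst z *\<^sub>R b))"
      by (rule continuous_on_compose2[OF Dc, of _ "\<lambda>z. snd z + fst z *\<^sub>R b"])
        (intro continuous_on_add continuous_on_snd continuous_on_scaleR continuous_on_fst continuous_on_id continuous_on_const, simp)
    then show "continuous_on (UNIV \<times> cbox 0 One) (\<lambda>(t, x). D (x + t *\<^sub>R b))"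
      by (simp add: case_prod_beta)
  qed (simp_all add: convex_UNIV)
  then have d1: "(\<Phi> has_field_derivative integral (cbox 0 One) D) (at 0)" by simp
  have const: "\<Phi> t = \<Phi> 0" if "t \<in> {-1<..<1}" for t
  proof (cases "t \<ge> 0")
    case True
    then show ?thesis unfolding \<Phi>_def using trans_inv[OF Fc b per, of t] that by simp
  next
    case False
    have "F (x + t *\<^sub>R b) = F (x + (t + 1) *\<^sub>R b)" for x
    proof -
      have "x + (t + 1) *\<^sub>R b = (x + t *\<^sub>R b) + b" by (simp add: scaleR_add_left)
      then show ?thesis using per[of "x + t *\<^sub>R b"] by (simp only:)
    qed
    then have "\<Phi> t = \<Phi> (t + 1)" unfolding \<Phi>_def by simp
    also have "\<dots> = \<Phi> 0" unfolding \<Phi>_def using trans_inv[OF Fc b per, of "t+1"] that False by simp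
    finally show ?thesis .
  qed
  have d2: "(\<Phi> has_field_derivative 0) (at 0)"
  proof (rule has_field_derivative_transform_within_open[of "\<lambda>_. \<Phi> 0" 0 0 "{-1<..<1}"])
    show "((\<lambda>_. \<Phi> 0) has_field_derivative 0) (at 0)" by (rule DERIV_const)
    show "open {-1<..<(1::real)}" by simp
    show "(0::real) \<in> {-1<..<1}" by simp
    show "\<Phi> 0 = \<Phi> x" if "x \<in> {-1<..<1}" for x using const[OF that] by simp
  qed
  show ?thesis using DERIV_unique[OF d1 d2] unfolding D_def .
qed

lemma inner_grad:
  assumes "e \<in> Basis" shows "grad f x \<bullet> e = partial e f x"
proof -
  have "grad f x \<bullet> e = (\<Sum>b\<in>Basis. (e \<bullet> b) * partial b f x)"
    unfolding grad_def inner_sum_left by (rule sum.cong) (auto simp: inner_commute)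
  then show ?thesis using sum_Basis_inner[OF assms] by simp
qed

lemma norm_sq_sum: "(norm (v::'a::euclidean_space))\<^sup>2 = (\<Sum>e\<in>Basis. (v \<bullet> e)\<^sup>2)"
  unfolding power2_norm_eq_inner by (subst euclidean_inner) (simp add: power2_eq_square)

lemma periodic_partial:
  fixes e :: "real^'n"
  assumes "periodic f" shows "periodic (partial e f)"
  unfolding periodic_def
proof (intro allI impI)
  fix x k :: "real^'n" assume k: "int_vec k"
  have "(\<lambda>t. f (x + k + t *\<^sub>R e)) = (\<lambda>t. f (x + t *\<^sub>R e))"
  proof
    fix t
    have "f (x + k + t *\<^sub>R e) = f ((x + t *\<^sub>R e) + k)" by (simp add: algebra_simps)
    also have "\<dots> = f (x + t *\<^sub>R e)" using assms k unfolding periodic_def by blast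
    finally show "f (x + k + t *\<^sub>R e) = f (x + t *\<^sub>R e)" .
  qed
  then show "partial e f (x + k) = partial e f x" unfolding partial_def by simp
qed

lemma periodic_grad:
  assumes "periodic f" shows "periodic (grad f)"
  using periodic_partial[OF assms] unfolding periodic_def grad_def by simp

lemma Basis_int_vec:
  assumes "(e::real^'n) \<in> Basis" shows "int_vec e"
  using assms unfolding int_vec_def Basis_vec_def by (auto simp: axis_def)

lemma periodic_bounded:
  fixes f :: "real^'n \<Rightarrow> real"
  assumes "periodic f" "continuous_on UNIV f"
  shows "\<exists>M. \<forall>x. \<bar>f x\<bar> \<le> M"
proof -
  have "compact (f ` cbox 0 One)"
    using assms(2) by (intro compact_continuous_image) (auto intro: continuous_on_subset)
  then obtain M where M: "\<forall>y\<in>f ` cbox 0 One. norm y \<le> M"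
    using compact_imp_bounded bounded_iff by metis
  have "\<bar>f x\<bar> \<le> M" for x
  proof -
    define k :: "real^'n" where "k = (\<chi> i. - of_int \<lfloor>x $ i\<rfloor>)"
    have "int_vec k" unfolding int_vec_def k_def by auto
    then have "f (x + k) = f x" using assms(1) unfolding periodic_def by blast
    moreover have "x + k \<in> cbox 0 One"
    proof -
      have "0 \<le> (x + k) $ i \<and> (x + k) $ i \<le> 1" for i
        unfolding k_def by auto linarith
      moreover have "(One::real^'n) \<bullet> b = 1" if "b \<in> Basis" for b
        using that by (simp add: inner_Basis inner_sum_left)
      ultimately show ?thesis unfolding mem_box Basis_vec_def by (auto simp: inner_axis)
    qed
    ultimately show ?thesis using M by force
  qed
  then show ?thesis by blast
qed

lemma C1_inner: "C1 (\<lambda>y::'a::euclidean_space. y \<bullet> c)"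
proof (rule C1_has_derivative(1)[where D = "\<lambda>b x. b \<bullet> c"])
  show "((\<lambda>y. y \<bullet> c) has_derivative (\<lambda>v. \<Sum>b\<in>Basis. v \<bullet> b * (b \<bullet> c))) (at x)" for x
  proof -
    have "((\<lambda>y. y \<bullet> c) has_derivative (\<lambda>v. v \<bullet> c)) (at x)" by (intro derivative_eq_intros) auto
    moreover have "(\<lambda>v. v \<bullet> c) = (\<lambda>v. \<Sum>b\<in>Basis. v \<bullet> b * (b \<bullet> c))"
      by (rule ext, subst euclidean_inner, rule sum.cong) (auto simp: inner_commute)
    ultimately show ?thesis by simp
  qed
  show "continuous_on UNIV (\<lambda>x. b \<bullet> c)" for b :: 'a by simp
qed

lemma abs_powr_deriv:
  assumes p: "p > 1"
  shows "((\<lambda>s. \<bar>s\<bar> powr p) has_real_derivative (p * sgn s * \<bar>s\<bar> powr (p - 1))) (at s)"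
proof -
  consider "s > 0" | "s < 0" | "s = 0" by linarith
  then show ?thesis
  proof cases
    case 1
    have "((\<lambda>s. s powr p) has_real_derivative (p * sgn s * \<bar>s\<bar> powr (p - 1))) (at s)"
      using has_real_derivative_powr[OF 1, of p] 1 by simp
    then show ?thesis
      by (rule has_field_derivative_transform_within_open[where S="{0<..}"]) (use 1 in auto)
  next
    case 2
    have "((\<lambda>s. (- s) powr p) has_real_derivative (p * (- s) powr (p - 1) * (-1))) (at s)"
    proof -
      have h1: "((\<lambda>s. s powr p) has_real_derivative (p * (- s) powr (p - 1))) (at (- s))"
        using has_real_derivative_powr[of "-s" p] 2 by simp
      have h2: "((\<lambda>s. - s) has_real_derivative (-1)) (at s)"
        by (auto intro!: derivative_eq_intros)
      show ?thesis using DERIV_chain2[OF h1 h2] by simp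
    qed
    then have "((\<lambda>s. (- s) powr p) has_real_derivative (p * sgn s * \<bar>s\<bar> powr (p - 1))) (at s)"
      using 2 by simp
    then show ?thesis
      by (rule has_field_derivative_transform_within_open[where S="{..<0}"]) (use 2 in auto)
  next
    case 3
    have lim: "((\<lambda>h. \<bar>h\<bar> powr (p - 1)) \<longlongrightarrow> 0) (at 0)"
    proof -
      have "((\<lambda>h::real. \<bar>h\<bar> powr (p - 1)) \<longlongrightarrow> \<bar>0\<bar> powr (p - 1)) (at 0)"
        using p by (intro tendsto_intros) auto
      then show ?thesis by simp
    qed
    have "((\<lambda>h. (\<bar>h\<bar> powr p - \<bar>0\<bar> powr p) / (h - 0)) \<longlongrightarrow> 0) (at 0)"
    proof (rule Lim_null_comparison[OF _ lim])
      show "\<forall>\<^sub>F h in at 0. norm ((\<bar>h\<bar> powr p - \<bar>0\<bar> powr p) / (h - 0)) \<le> \<bar>h\<bar> powr (p - 1)"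
      proof (rule always_eventually, rule allI)
        fix h :: real
        show "norm ((\<bar>h\<bar> powr p - \<bar>0\<bar> powr p) / (h - 0)) \<le> \<bar>h\<bar> powr (p - 1)"
        proof (cases "h = 0")
          case False
          then have "\<bar>h\<bar> powr p = \<bar>h\<bar> powr (p - 1) * \<bar>h\<bar>"
            by (simp add: powr_diff)
          then show ?thesis using False by (simp add: abs_divide)
        qed simp
      qed
    qed
    then have "((\<lambda>s. \<bar>s\<bar> powr p) has_real_derivative 0) (at 0)"
      by (simp add: has_field_derivative_iff)
    then show ?thesis using 3 by simp
  qed
qed

lemma C1_cong: "C1 f \<Longrightarrow> (\<And>x. f x = g x) \<Longrightarrow> C1 g"
proof -
  assume "C1 f" "\<And>x. f x = g x"
  then have "f = g" by auto
  with \<open>C1 f\<close> show "C1 g" by simp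
qed

lemma dp_sq:
  fixes p l s :: real
  assumes "p = (l + 1) / 2" "l > 1"
  shows "(p * sgn s * \<bar>s\<bar> powr (p - 1))\<^sup>2 = p\<^sup>2 * \<bar>s\<bar> powr (l - 1)"
proof (cases "s = 0")
  case True then show ?thesis using assms by simp
next
  case False
  have "(\<bar>s\<bar> powr (p - 1))\<^sup>2 = \<bar>s\<bar> powr ((p - 1) + (p - 1))"
    unfolding power2_eq_square by (rule powr_add[symmetric])
  also have "(p - 1) + (p - 1) = l - 1" using assms by simp
  finally have "(\<bar>s\<bar> powr (p - 1))\<^sup>2 = \<bar>s\<bar> powr (l - 1)" .
  moreover have "(sgn s)\<^sup>2 = 1" using False by (simp add: sgn_if)
  ultimately show ?thesis by (simp add: power_mult_distrib)
qed

theorem lemma3p6: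
  fixes H :: "real^'n \<Rightarrow> real^'n \<Rightarrow> real"
    and g :: "real \<Rightarrow> real"
    and u m :: "real^'n \<Rightarrow> real"
    and Hbar l :: real
  assumes H_smooth: "smooth (\<lambda>z::(real^'n) \<times> (real^'n). H (fst z) (snd z))"
    and H_per: "\<And>x p k. int_vec k \<Longrightarrow> H (x + k) p = H x p"
    and u_C2: "Ck 2 u" and m_C2: "Ck 2 m"
    and u_per: "periodic u" and m_per: "periodic m"
    and m_pos: "\<And>x. m x > 0"
    and eq1: "\<And>x. laplacian u x + H x (grad u x) = g (m x) + Hbar"
    and eq2: "\<And>x. laplacian m x - divergence (\<lambda>y. m y *\<^sub>R DpH H y (grad u y)) x = 0"
    and l: "l > 1"
  shows "torus_integral (\<lambda>x. (norm (grad (\<lambda>y. \<bar>ln (m y)\<bar> powr ((l + 1) / 2)) x))\<^sup>2)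
         \<le> (l + 1)\<^sup>2 / 4 *
           torus_integral (\<lambda>x. \<bar>ln (m x)\<bar> powr (l - 1) * (norm (DpH H x (grad u x)))\<^sup>2)"
proof -
  define Hz where "Hz = (\<lambda>z::(real^'n) \<times> (real^'n). H (fst z) (snd z))"
  have Hz2: "Ck (Suc (Suc 0)) Hz" using H_smooth unfolding smooth_def Hz_def by blast
  have HqC1: "C1 (partial c Hz)" if "c \<in> Basis" for c
    using that by (intro Ck_Suc_C1[of 0]) (use Hz2[unfolded Ck.simps(2)[of "Suc 0"]] in blast)
  have DpH_eq: "DpH H x p \<bullet> e = partial (0, e) Hz (x, p)" if "e \<in> Basis" for x p e
    unfolding DpH_def inner_grad[OF that] by (simp add: partial_def Hz_def)
  have uC2: "Ck (Suc (Suc 0)) u" using u_C2 by (simp add: numeral_2_eq_2)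
  have mC2: "Ck (Suc (Suc 0)) m" using m_C2 by (simp add: numeral_2_eq_2)
  have uC1: "C1 u" using uC2 by (rule Ck_Suc_C1)
  have upC1: "C1 (partial c u)" if "c \<in> Basis" for c using that by (intro Ck_Suc_C1[of 0]) (use uC2[unfolded Ck.simps(2)[of "Suc 0"]] in blast)
  have mC1: "C1 m" using mC2 by (rule Ck_Suc_C1)
  have mpC1: "C1 (partial c m)" if "c \<in> Basis" for c using that by (intro Ck_Suc_C1[of 0]) (use mC2[unfolded Ck.simps(2)[of "Suc 0"]] in blast)
  have mcont: "continuous_on UNIV m" using mC1 by (rule C1_cont)
  have mpcont: "continuous_on UNIV (partial c m)" if "c \<in> Basis" for c
    using mC1 that unfolding C1_def by auto
  define bb where "bb e y = partial (0, e) Hz (y, grad u y)" for e y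
  have hC1: "C1 (\<lambda>y. (y, grad u y) \<bullet> c)" if c: "c \<in> Basis" for c :: "(real^'n) \<times> (real^'n)"
  proof -
    from c consider (L) c1 where "c = (c1, 0)" "c1 \<in> Basis" | (R) c2 where "c = (0, c2)" "c2 \<in> Basis"
      unfolding Basis_prod_def by blast
    then show ?thesis
    proof cases
      case L
      then show ?thesis using C1_inner[of c1] by simp
    next
      case R
      then show ?thesis using upC1[OF R(2)] by (simp add: inner_grad)
    qed
  qed
  have bbC1: "C1 (bb e)" if e: "e \<in> Basis" for e
  proof -
    have "(0, e) \<in> (Basis :: ((real^'n) \<times> (real^'n)) set)" using e unfolding Basis_prod_def by blast
    from C1_chain(1)[OF HqC1[OF this] hC1] show ?thesis unfolding bb_def by (simp add: fun_eq_iff)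
  qed
  have bb_DpH: "bb e y = DpH H y (grad u y) \<bullet> e" if "e \<in> Basis" for e y
    using DpH_eq[OF that] unfolding bb_def by simp
  have gper: "periodic (grad u)" using u_per by (rule periodic_grad)
  have DpH_per: "DpH H (x + k) p = DpH H x p" if "int_vec k" for x p k
  proof -
    have "H (x + k) = H x" by (rule ext) (rule H_per[OF that])
    then show ?thesis unfolding DpH_def by simp
  qed
  have bb_per: "bb e (x + k) = bb e x" if "e \<in> Basis" "int_vec k" for e x k
    using bb_DpH[OF that(1)] DpH_per[OF that(2)] gper that(2) unfolding periodic_def by simp
  have bbcont: "continuous_on UNIV (bb e)" if "e \<in> Basis" for e using bbC1[OF that] by (rule C1_cont)
  have mne: "m y \<noteq> 0" for y using m_pos[of y] by simp
  define w where "w y = ln (m y)" for y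
  have wC1: "C1 w" unfolding w_def
    by (rule C1_chain_real[OF mC1, of ln inverse])
       (use m_pos in \<open>auto intro!: DERIV_ln continuous_on_inverse mcont simp: mne\<close>)
  have pw: "partial e w y = inverse (m y) * partial e m y" if "e \<in> Basis" for e y
    unfolding w_def by (rule partial_chain_real[OF mC1 DERIV_ln[OF m_pos] that])
  have wcont: "continuous_on UNIV w" using wC1 by (rule C1_cont)
  have wper: "periodic w" using m_per unfolding periodic_def w_def by simp
  obtain M where M: "\<And>x. \<bar>w x\<bar> \<le> M" using periodic_bounded[OF wper wcont] by blast
  define R where "R = M + 1"
  define kf where "kf s = exp (- s) * \<bar>s\<bar> powr (l - 1)" for s :: real
  have kfcont: "continuous_on A kf" for A
    unfolding kf_def using l
    by (intro continuous_on_mult continuous_on_exp continuous_on_minus continuous_on_id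
        continuous_on_powr' continuous_on_rabs continuous_on_const) auto
  define K where "K s = integral {-R..s} kf" for s
  have Kd: "(K has_real_derivative kf s) (at s)" if "\<bar>s\<bar> < R" for s
  proof -
    have "(K has_real_derivative kf s) (at s within {-R..R})"
      unfolding K_def by (rule integral_has_real_derivative[OF kfcont]) (use that in auto)
    moreover have "at s within {-R..R} = at s"
      by (rule at_within_interior) (use that in auto)
    ultimately show ?thesis by simp
  qed
  define \<phi> where "\<phi> y = K (w y)" for y
  have Kdw: "(K has_real_derivative kf (w y)) (at (w y))" for y
    using Kd M[of y] unfolding R_def by simp
  have phiC1: "C1 \<phi>" unfolding \<phi>_def
    by (rule C1_chain_real[OF wC1 Kdw]) (rule continuous_on_compose2[OF kfcont wcont], auto)
  have pphi: "partial e \<phi> y = kf (w y) * partial e w y" if "e \<in> Basis" for e y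
    unfolding \<phi>_def by (rule partial_chain_real[OF wC1 Kdw that])
  have phiper: "\<phi> (x + k) = \<phi> x" if "int_vec k" for x k
    using wper that unfolding periodic_def \<phi>_def by simp
  define W where "W e y = partial e m y - m y * bb e y" for e y
  have WC1: "C1 (W e)" if "e \<in> Basis" for e
    unfolding W_def by (intro C1_diff(1) C1_mult(1) mpC1 bbC1 mC1 that)
  have pW: "partial e (W e) y = partial e (partial e m) y - partial e (\<lambda>y. m y * bb e y) y"
    if "e \<in> Basis" for e y
    unfolding W_def by (rule C1_diff(2)[OF mpC1[OF that] C1_mult(1)[OF mC1 bbC1[OF that]] that])
  have Wper: "W e (x + k) = W e x" if "e \<in> Basis" "int_vec k" for e x k
    using periodic_partial[OF m_per, of e] m_per bb_per[OF that] that(2)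
    unfolding W_def periodic_def by simp
  define F where "F e y = \<phi> y * W e y" for e y
  have FC1: "C1 (F e)" if "e \<in> Basis" for e
    unfolding F_def by (rule C1_mult(1)[OF phiC1 WC1[OF that]])
  have pF: "partial e (F e) y = partial e \<phi> y * W e y + \<phi> y * partial e (W e) y"
    if "e \<in> Basis" for e y
    unfolding F_def by (rule C1_mult(2)[OF phiC1 WC1[OF that] that])
  have Fzero: "integral (cbox 0 One) (partial e (F e)) = 0" if "e \<in> Basis" for e
  proof (rule integral_partial_zero[OF FC1[OF that] that])
    fix x show "F e (x + e) = F e x"
      unfolding F_def using phiper Wper that Basis_int_vec[OF that] by simp
  qed
  have div_eq: "divergence (\<lambda>y. m y *\<^sub>R DpH H y (grad u y)) y = (\<Sum>e\<in>Basis. partial e (\<lambda>y. m y * bb e y) y)" for y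
    unfolding divergence_def
  proof (rule sum.cong[OF refl])
    fix e :: "real^'n" assume e: "e \<in> Basis"
    have "(\<lambda>y. (m y *\<^sub>R DpH H y (grad u y)) \<bullet> e) = (\<lambda>y. m y * bb e y)"
      using bb_DpH[OF e] by (simp add: fun_eq_iff)
    then show "partial e (\<lambda>y. (m y *\<^sub>R DpH H y (grad u y)) \<bullet> e) y = partial e (\<lambda>y. m y * bb e y) y"
      by simp
  qed
  have sumW: "(\<Sum>e\<in>Basis. partial e (W e) y) = 0" for y
  proof -
    have "(\<Sum>e\<in>Basis. partial e (W e) y) = (\<Sum>e\<in>Basis. partial e (partial e m) y - partial e (\<lambda>y. m y * bb e y) y)"
      by (rule sum.cong[OF refl]) (rule pW)
    also have "\<dots> = laplacian m y - divergence (\<lambda>y. m y *\<^sub>R DpH H y (grad u y)) y"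
      unfolding laplacian_def div_eq by (simp add: sum_subtractf)
    also have "\<dots> = 0" by (rule eq2)
    finally show ?thesis .
  qed
  define kk where "kk y = \<bar>w y\<bar> powr (l - 1)" for y
  define a where "a e y = partial e m y / m y" for e y
  define Q where "Q y = (\<Sum>e\<in>Basis. partial e (F e) y)" for y
  have Qeq: "Q y = kk y * (\<Sum>e\<in>Basis. (a e y)\<^sup>2 - a e y * bb e y)" for y
  proof -
    have "Q y = (\<Sum>e\<in>Basis. partial e \<phi> y * W e y) + \<phi> y * (\<Sum>e\<in>Basis. partial e (W e) y)"
      unfolding Q_def by (simp add: pF sum.distrib sum_distrib_left)
    also have "\<dots> = (\<Sum>e\<in>Basis. partial e \<phi> y * W e y)" by (simp add: sumW)
    also have "\<dots> = (\<Sum>e\<in>Basis. kk y * ((a e y)\<^sup>2 - a e y * bb e y))"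
    proof (rule sum.cong[OF refl])
      fix e :: "real^'n" assume e: "e \<in> Basis"
      have my: "m y > 0" by (rule m_pos)
      have kfw: "kf (w y) = kk y / m y"
        unfolding kf_def kk_def w_def using my by (simp add: exp_minus divide_inverse mult.commute)
      show "partial e \<phi> y * W e y = kk y * ((a e y)\<^sup>2 - a e y * bb e y)"
        unfolding pphi[OF e] pw[OF e] kfw W_def a_def using my
        by (simp add: field_simps power2_eq_square)
    qed
    also have "\<dots> = kk y * (\<Sum>e\<in>Basis. (a e y)\<^sup>2 - a e y * bb e y)"
      by (simp add: sum_distrib_left)
    finally show ?thesis .
  qed
  have Qint: "integral (cbox 0 One) Q = 0"
  proof -
    have "integral (cbox 0 One) Q = (\<Sum>e\<in>Basis. integral (cbox 0 One) (partial e (F e)))"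
      unfolding Q_def
      by (rule integral_sum) (use FC1 in \<open>auto simp: C1_def intro!: integrable_continuous intro: continuous_on_subset\<close>)
    also have "\<dots> = 0" by (simp add: Fzero)
    finally show ?thesis .
  qed
  have kkcont: "continuous_on UNIV kk"
    unfolding kk_def using l
    by (intro continuous_on_powr' continuous_on_rabs wcont continuous_on_const) auto
  have acont: "continuous_on UNIV (a e)" if "e \<in> Basis" for e
    unfolding a_def using mne by (intro continuous_on_divide mpcont[OF that] mcont) auto
  have Qcont: "continuous_on UNIV Q"
    unfolding Q_def using FC1 by (intro continuous_on_sum) (auto simp: C1_def)
  define A where "A y = kk y * (\<Sum>e\<in>Basis. (a e y)\<^sup>2)" for y
  define B where "B y = kk y * (\<Sum>e\<in>Basis. (bb e y)\<^sup>2)" for y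
  have Acont: "continuous_on UNIV A"
    unfolding A_def by (intro continuous_on_mult kkcont continuous_on_sum continuous_on_power acont) auto
  have Bcont: "continuous_on UNIV B"
    unfolding B_def by (intro continuous_on_mult kkcont continuous_on_sum continuous_on_power bbcont) auto
  have integ: "f integrable_on cbox 0 One" if "continuous_on UNIV f" for f :: "real^'n \<Rightarrow> real"
    using that by (intro integrable_continuous) (auto intro: continuous_on_subset)
  have pointwise: "A y \<le> 2 * Q y + B y" for y
  proof -
    have kk0: "kk y \<ge> 0" unfolding kk_def by simp
    have "2 * Q y + B y - A y = kk y * (\<Sum>e\<in>Basis. (a e y - bb e y)\<^sup>2)"
      unfolding Qeq A_def B_def
      by (simp add: algebra_simps power2_eq_square sum_distrib_left sum.distrib sum_subtractf)
    also have "\<dots> \<ge> 0" using kk0 by (intro mult_nonneg_nonneg sum_nonneg) auto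
    finally show ?thesis by simp
  qed
  have AB: "integral (cbox 0 One) A \<le> integral (cbox 0 One) B"
  proof -
    have "integral (cbox 0 One) A \<le> integral (cbox 0 One) (\<lambda>y. 2 * Q y + B y)"
    proof (rule integral_le)
      show "A integrable_on cbox 0 One" by (rule integ[OF Acont])
      have "continuous_on UNIV (\<lambda>y. 2 * Q y + B y)"
        by (intro continuous_on_add continuous_on_mult continuous_on_const Qcont Bcont)
      then show "(\<lambda>y. 2 * Q y + B y) integrable_on cbox 0 One" by (rule integ)
    qed (rule pointwise)
    also have "\<dots> = 2 * integral (cbox 0 One) Q + integral (cbox 0 One) B"
      using integ[OF Qcont] integ[OF Bcont] by (simp add: integral_add)
    also have "\<dots> = integral (cbox 0 One) B" by (simp add: Qint)
    finally show ?thesis .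
  qed
  define p where "p = (l + 1) / 2"
  have lhs: "(norm (grad (\<lambda>y. \<bar>ln (m y)\<bar> powr ((l + 1) / 2)) x))\<^sup>2 = p\<^sup>2 * A x" for x
  proof -
    have pd: "partial e (\<lambda>y. \<bar>ln (m y)\<bar> powr ((l + 1) / 2)) x = (p * sgn (w x) * \<bar>w x\<bar> powr (p - 1)) * partial e w x"
      if "e \<in> Basis" for e
    proof -
      have "p > 1" unfolding p_def using l by simp
      from partial_chain_real[OF wC1 abs_powr_deriv[OF this, of "w x"] that]
      show ?thesis unfolding w_def p_def by simp
    qed
    have "(norm (grad (\<lambda>y. \<bar>ln (m y)\<bar> powr ((l + 1) / 2)) x))\<^sup>2
        = (\<Sum>e\<in>Basis. (partial e (\<lambda>y. \<bar>ln (m y)\<bar> powr ((l + 1) / 2)) x)\<^sup>2)"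
      unfolding norm_sq_sum by (rule sum.cong[OF refl]) (simp add: inner_grad)
    also have "\<dots> = (\<Sum>e\<in>Basis. p\<^sup>2 * kk x * (a e x)\<^sup>2)"
    proof (rule sum.cong[OF refl])
      fix e :: "real^'n" assume e: "e \<in> Basis"
      have "(partial e (\<lambda>y. \<bar>ln (m y)\<bar> powr ((l + 1) / 2)) x)\<^sup>2
          = (p * sgn (w x) * \<bar>w x\<bar> powr (p - 1))\<^sup>2 * (partial e w x)\<^sup>2"
        unfolding pd[OF e] by (simp add: power_mult_distrib)
      also have "\<dots> = p\<^sup>2 * kk x * (a e x)\<^sup>2"
        unfolding dp_sq[OF p_def l] kk_def pw[OF e] a_def
        by (simp add: divide_inverse mult.commute)
      finally show "(partial e (\<lambda>y. \<bar>ln (m y)\<bar> powr ((l + 1) / 2)) x)\<^sup>2 = p\<^sup>2 * kk x * (a e x)\<^sup>2" .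
    qed
    also have "\<dots> = p\<^sup>2 * A x" unfolding A_def by (simp add: sum_distrib_left mult.assoc)
    finally show ?thesis .
  qed
  have rhs: "\<bar>ln (m x)\<bar> powr (l - 1) * (norm (DpH H x (grad u x)))\<^sup>2 = B x" for x
  proof -
    have "(norm (DpH H x (grad u x)))\<^sup>2 = (\<Sum>e\<in>Basis. (bb e x)\<^sup>2)"
      unfolding norm_sq_sum by (rule sum.cong[OF refl]) (simp add: bb_DpH)
    then show ?thesis unfolding B_def kk_def w_def by simp
  qed
  have "torus_integral (\<lambda>x. (norm (grad (\<lambda>y. \<bar>ln (m y)\<bar> powr ((l + 1) / 2)) x))\<^sup>2)
      = p\<^sup>2 * integral (cbox 0 One) A"
    unfolding torus_integral_def lhs by simp
  also have "\<dots> \<le> p\<^sup>2 * integral (cbox 0 One) B"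
    using AB by (intro mult_left_mono) auto
  also have "p\<^sup>2 = (l + 1)\<^sup>2 / 4" unfolding p_def by (simp add: power_divide)
  also have "integral (cbox 0 One) B
      = torus_integral (\<lambda>x. \<bar>ln (m x)\<bar> powr (l - 1) * (norm (DpH H x (grad u x)))\<^sup>2)"
    unfolding torus_integral_def rhs ..
  finally show ?thesis .
qed

end
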